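(* There is a universal constant $c>0$ such that: for any even integer $n\ge 2$, any integer $k\ge1$, and any reals $G,\lambda>0$ with $G\ge 2\lambda$, there exist functions $f_1,\dots,f_n$ on $\mathbb{R}$ and an initialization $x_0$ satisfying Assumption (A) with parameters $n,\lambda,G$, such that for every step size $\eta>0$, SGD with random reshuffling satisfies \[ \mathbb{E}\Big[F(x_k)-\inf_xF(x)\Big]\;\ge\;c\cdot\min\left\{\lambda,\ \frac{G^2}{\lambda nk^3}\right\}. \]
   Context: Assumption (A) (parameters $n\ge 2$, $\lambda>0$, $G>0$, on $\mathbb{R}^d$): $F(x)=\frac1n\sum_{i=1}^n f_i(x)$, where each $f_i:\mathbb{R}^d\to\mathbb{R}$ is a convex quadratic function $f_i(x)=x^\top A_ix+b_i^\top x$ (with $A_i$ symmetric positive semidefinite); $F$ is $\lambda$-strongly convex with unique minimizer $x^*$; each $\nabla f_i$ is $L$-Lipschitz for some $L\le 3\lambda$; each $f_i$ satisfies $\|\nabla f_i(x)\|\le G$ for all $x$ with $\|x-x^*\|\le 1$; and the initialization satisfies $\|x_0-x^*\|\le 1$. SGD with random reshuffling with constant step size $\eta$: for each of $k$ epochs, a fresh uniformly random permutation $\pi$ of $\{1,\dots,n\}$ (independent across epochs) is drawn and the updates $x\leftarrow x-\eta\nabla f_{\pi(j)}(x)$, $j=1,\dots,n$, are performed; $x_t$ is the iterate at the end of epoch $t$. *)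

theory Defs
  imports "HOL-Analysis.Analysis" "HOL-Probability.Probability"
begin

definition strongly_convex_on :: "real \<Rightarrow> real set \<Rightarrow> (real \<Rightarrow> real) \<Rightarrow> bool" where
  "strongly_convex_on \<mu> S F \<longleftrightarrow>
     (\<forall>x\<in>S. \<forall>y\<in>S. \<forall>t::real. 0 \<le> t \<and> t \<le> 1 \<longrightarrow>
        F (t * x + (1 - t) * y) \<le> t * F x + (1 - t) * F y - \<mu> / 2 * t * (1 - t) * (x - y)^2)"

definition avgF :: "nat \<Rightarrow> (nat \<Rightarrow> real \<Rightarrow> real) \<Rightarrow> real \<Rightarrow> real" where
  "avgF n f x = (1 / real n) * (\<Sum>i=1..n. f i x)"

definition minimizer :: "(real \<Rightarrow> real) \<Rightarrow> real" where
  "minimizer F = (THE xs. \<forall>y. F xs \<le> F y)"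

definition assumptionA :: "nat \<Rightarrow> real \<Rightarrow> real \<Rightarrow> (nat \<Rightarrow> real \<Rightarrow> real) \<Rightarrow> real \<Rightarrow> bool" where
  "assumptionA n lam G f x0 \<longleftrightarrow>
     n \<ge> 2 \<and> lam > 0 \<and> G > 0 \<and>
     (\<forall>i\<in>{1..n}. \<exists>a b::real. a \<ge> 0 \<and> (\<forall>x. f i x = a * x^2 + b * x)) \<and>
     strongly_convex_on lam UNIV (avgF n f) \<and>
     (\<exists>!xs. \<forall>y. avgF n f xs \<le> avgF n f y) \<and>
     (\<exists>L. L \<le> 3 * lam \<and> (\<forall>i\<in>{1..n}. L-lipschitz_on UNIV (deriv (f i)))) \<and>
     (\<forall>i\<in>{1..n}. \<forall>x. \<bar>x - minimizer (avgF n f)\<bar> \<le> 1 \<longrightarrow> \<bar>deriv (f i) x\<bar> \<le> G) \<and>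
     \<bar>x0 - minimizer (avgF n f)\<bar> \<le> 1"

definition rr_epoch :: "(nat \<Rightarrow> real \<Rightarrow> real) \<Rightarrow> nat \<Rightarrow> real \<Rightarrow> (nat \<Rightarrow> nat) \<Rightarrow> real \<Rightarrow> real" where
  "rr_epoch f n \<eta> \<sigma> x = fold (\<lambda>j y. y - \<eta> * deriv (f (\<sigma> j)) y) [1..<n+1] x"

primrec rr_iter :: "(nat \<Rightarrow> real \<Rightarrow> real) \<Rightarrow> nat \<Rightarrow> real \<Rightarrow> real \<Rightarrow> nat \<Rightarrow> real pmf" where
  "rr_iter f n \<eta> x0 0 = return_pmf x0"
| "rr_iter f n \<eta> x0 (Suc t) =
     bind_pmf (rr_iter f n \<eta> x0 t)
       (\<lambda>x. map_pmf (\<lambda>\<sigma>. rr_epoch f n \<eta> \<sigma> x) (pmf_of_set {\<sigma>. \<sigma> permutes {1..n}}))"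

end

theory Submission
  imports Defs
begin

definition bb :: "real \<Rightarrow> nat \<Rightarrow> real" where "bb G i = G/2 * (-1)^i"
definition ff :: "real \<Rightarrow> real \<Rightarrow> nat \<Rightarrow> real \<Rightarrow> real" where
  "ff lam G i x = lam/2 * x^2 + bb G i * x"

lemma sum_alt: "(\<Sum>i=1..2*p. (-1::real)^i) = 0"
proof (induction p)
  case (Suc p)
  have "2 * Suc p = Suc (Suc (2*p))" by simp
  then have "(\<Sum>i=1..2*Suc p. (-1::real)^i) = (\<Sum>i=1..2*p. (-1::real)^i) + (-1)^(Suc (2*p)) + (-1)^(Suc (Suc (2*p)))"
    by (simp add: sum.cl_ivl_Suc)
  then show ?case using Suc by simp
qed simp

lemma deriv_ff: "deriv (ff lam G i) = (\<lambda>y. lam * y + bb G i)"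
proof
  fix y
  have "((ff lam G i) has_real_derivative (lam * y + bb G i)) (at y)"
    unfolding ff_def by (auto intro!: derivative_eq_intros)
  then show "deriv (ff lam G i) y = lam * y + bb G i" by (rule DERIV_imp_deriv)
qed

lemma avgF_ff: assumes "even n" "n \<ge> 2" shows "avgF n (ff lam G) = (\<lambda>x. lam/2 * x^2)"
proof
  fix x
  obtain p where n: "n = 2*p" using assms by auto
  have "(\<Sum>i=1..n. ff lam G i x) = (\<Sum>i=1..n. lam/2*x^2) + (G/2 * x) * (\<Sum>i=1..n. (-1::real)^i)"
    unfolding ff_def bb_def by (simp add: sum.distrib sum_distrib_left algebra_simps)
  also have "\<dots> = real n * (lam/2*x^2)" using sum_alt[of p] n by simp
  finally show "avgF n (ff lam G) x = lam/2 * x^2" using assms unfolding avgF_def by simp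
qed

lemma min_sq: assumes "lam > 0" shows "minimizer (\<lambda>x::real. lam/2 * x^2) = 0"
  unfolding minimizer_def
  by (rule the_equality) (use assms in \<open>auto simp: not_le intro: order.antisym dest: spec[of _ 0]\<close>)

lemma assmA:
  assumes "even n" "n \<ge> 2" "G > 0" "lam > 0" "G \<ge> 2*lam"
  shows "assumptionA n lam G (ff lam G) 1"
proof -
  have F: "avgF n (ff lam G) = (\<lambda>x. lam/2 * x^2)" using avgF_ff assms by simp
  have m: "minimizer (avgF n (ff lam G)) = 0" using F min_sq assms by simp
  have sc: "strongly_convex_on lam UNIV (avgF n (ff lam G))"
  proof -
    have "lam/2 * (t*x+(1-t)*y)^2 = t*(lam/2*x^2) + (1-t)*(lam/2*y^2) - lam/2*t*(1-t)*(x-y)^2" for t x y :: real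
      by (simp add: power2_eq_square field_simps)
    then show ?thesis unfolding F strongly_convex_on_def by simp
  qed
  have um: "\<exists>!xs. \<forall>y. avgF n (ff lam G) xs \<le> avgF n (ff lam G) y"
    unfolding F
    by (rule ex1I[of _ 0]) (use assms in \<open>auto dest: spec[of _ 0]\<close>)
  have lip: "\<forall>i\<in>{1..n}. lam-lipschitz_on UNIV (deriv (ff lam G i))"
    unfolding deriv_ff
    by (auto intro!: lipschitz_onI simp: dist_real_def abs_mult[symmetric] right_diff_distrib[symmetric] abs_mult assms less_imp_le)
  have gb: "\<bar>deriv (ff lam G i) x\<bar> \<le> G" if "\<bar>x\<bar> \<le> 1" for i x
  proof -
    have "\<bar>lam * x\<bar> \<le> lam" using that assms by (simp add: abs_mult)
    moreover have "\<bar>bb G i\<bar> = G/2" using assms unfolding bb_def by (simp add: abs_mult)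
    moreover have "\<bar>lam * x + bb G i\<bar> \<le> \<bar>lam * x\<bar> + \<bar>bb G i\<bar>" by (rule abs_triangle_ineq)
    ultimately show ?thesis unfolding deriv_ff using assms by linarith
  qed
  have q: "\<forall>i\<in>{1..n}. \<exists>a b::real. a \<ge> 0 \<and> (\<forall>x. ff lam G i x = a * x^2 + b * x)"
  proof
    fix i show "\<exists>a b::real. a \<ge> 0 \<and> (\<forall>x. ff lam G i x = a * x^2 + b * x)"
      by (rule exI[of _ "lam/2"], rule exI[of _ "bb G i"]) (use assms in \<open>auto simp: ff_def\<close>)
  qed
  show ?thesis unfolding assumptionA_def
    using assms sc um lip gb m q
    by (auto intro!: exI[of _ lam])
qed

lemma fold_epoch:
  "fold (\<lambda>j y. y - \<eta> * (lam * y + c j)) [1..<m+1] (x::real)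
     = (1 - \<eta>*lam)^m * x - \<eta> * (\<Sum>j=1..m. (1 - \<eta>*lam)^(m-j) * c j)"
proof (induction m)
  case 0
  then show ?case by simp
next
  case (Suc m)
  let ?q = "1 - \<eta>*lam"
  have "[1..<Suc m + 1] = [1..<m+1] @ [m+1]" by simp
  then have "fold (\<lambda>j y. y - \<eta> * (lam * y + c j)) [1..<Suc m+1] x
     = ?q * (?q^m * x - \<eta> * (\<Sum>j=1..m. ?q^(m-j) * c j)) - \<eta> * c (m+1)"
    unfolding \<open>[1..<Suc m + 1] = [1..<m+1] @ [m+1]\<close> fold_append comp_def Suc[symmetric]
    by (simp only: fold.simps comp_def id_def) (simp add: algebra_simps)
  also have "\<dots> = ?q^(Suc m) * x - \<eta> * ((\<Sum>j=1..m. ?q^(Suc m-j) * c j) + c (Suc m))"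
  proof -
    have e: "?q * (\<Sum>j=1..m. ?q^(m-j) * c j) = (\<Sum>j=1..m. ?q^(Suc m-j) * c j)"
      unfolding sum_distrib_left by (rule sum.cong) (auto simp: Suc_diff_le)
    show ?thesis by (simp only: flip: e) (simp add: algebra_simps)
  qed
  also have "(\<Sum>j=1..m. ?q^(Suc m-j) * c j) + c (Suc m) = (\<Sum>j=1..Suc m. ?q^(Suc m-j) * c j)"
    by (simp add: sum.cl_ivl_Suc)
  finally show ?case .
qed

lemma epoch_closed:
  "rr_epoch (ff lam G) n \<eta> \<sigma> x = (1 - \<eta>*lam)^n * x - \<eta> * (\<Sum>j=1..n. (1 - \<eta>*lam)^(n-j) * bb G (\<sigma> j))"
  unfolding rr_epoch_def deriv_ff using fold_epoch[of \<eta> lam "\<lambda>j. bb G (\<sigma> j)" n x] by simp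

definition Perms :: "nat \<Rightarrow> (nat \<Rightarrow> nat) set" where "Perms n = {\<sigma>. \<sigma> permutes {1..n}}"

lemma Perms_finite: "finite (Perms n)" unfolding Perms_def by (simp add: finite_permutations)
lemma Perms_ne: "Perms n \<noteq> {}" unfolding Perms_def using permutes_id by blast

lemma sym1:
  assumes "j \<in> {1..n}"
  shows "(\<Sum>\<sigma>\<in>Perms n. h (\<sigma> j)) = (\<Sum>\<sigma>\<in>Perms n. h (\<sigma> 1))"
proof -
  let ?t = "Transposition.transpose 1 j"
  have "?t permutes {1..n}" using assms by (intro permutes_swap_id) auto
  from sum_permutations_compose_right[OF this, of "\<lambda>\<sigma>. h (\<sigma> 1)"]
  show ?thesis unfolding Perms_def by simp
qed

lemma sym2:
  assumes "j \<in> {1..n}" "j' \<in> {1..n}" "j \<noteq> j'" "n \<ge> 2"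
  shows "(\<Sum>\<sigma>\<in>Perms n. h (\<sigma> j) (\<sigma> j')) = (\<Sum>\<sigma>\<in>Perms n. h (\<sigma> 1) (\<sigma> 2))"
proof -
  define z where "z = Transposition.transpose 1 j 2"
  let ?t = "Transposition.transpose z j' \<circ> Transposition.transpose 1 j"
  have zz: "z = (if j = 2 then 1 else 2)" unfolding z_def by (auto simp: Transposition.transpose_def)
  have z: "z \<in> {1..n}" "z \<noteq> j" using assms unfolding zz by auto
  have "?t permutes {1..n}" using assms z by (intro permutes_compose permutes_swap_id) auto
  from sum_permutations_compose_right[OF this, of "\<lambda>\<sigma>. h (\<sigma> 1) (\<sigma> 2)"]
  have "(\<Sum>\<sigma>\<in>Perms n. h (\<sigma> 1) (\<sigma> 2)) = (\<Sum>\<sigma>\<in>Perms n. h (\<sigma> (?t 1)) (\<sigma> (?t 2)))"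
    unfolding Perms_def by simp
  moreover have "?t 1 = j" using z assms by (simp add: Transposition.transpose_def)
  moreover have "?t 2 = j'" using z assms by (simp add: Transposition.transpose_def z_def)
  ultimately show ?thesis by simp
qed

definition eps :: "nat \<Rightarrow> real" where "eps i = (-1)^i"

lemma eps_sq: "eps i * eps i = 1" unfolding eps_def by (simp flip: power_add)

lemma perm_sum: "\<sigma> \<in> Perms n \<Longrightarrow> (\<Sum>j=1..n. h (\<sigma> j)) = (\<Sum>i=1..n. h i)"
  unfolding Perms_def using sum.reindex_bij_betw[OF permutes_imp_bij, of \<sigma> "{1..n}" h] by simp

lemma eps_total: assumes "even n" shows "(\<Sum>i=1..n. eps i) = 0"
  using assms sum_alt unfolding eps_def by (auto elim!: evenE)

lemma mean0:
  assumes "even n" "n \<ge> 2" "j \<in> {1..n}"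
  shows "(\<Sum>\<sigma>\<in>Perms n. eps (\<sigma> j)) = 0"
proof -
  have "real n * (\<Sum>\<sigma>\<in>Perms n. eps (\<sigma> 1)) = (\<Sum>j'=1..n. \<Sum>\<sigma>\<in>Perms n. eps (\<sigma> j'))"
  proof -
    have "(\<Sum>j'=1..n. \<Sum>\<sigma>\<in>Perms n. eps (\<sigma> j')) = (\<Sum>j'=1..n. \<Sum>\<sigma>\<in>Perms n. eps (\<sigma> 1))"
      by (rule sum.cong[OF refl]) (rule sym1)
    then show ?thesis by simp
  qed
  also have "\<dots> = (\<Sum>\<sigma>\<in>Perms n. \<Sum>j'=1..n. eps (\<sigma> j'))" by (rule sum.swap)
  also have "\<dots> = 0" using perm_sum[of _ n eps] eps_total[OF assms(1)] by simp
  finally have "(\<Sum>\<sigma>\<in>Perms n. eps (\<sigma> 1)) = 0" using assms by simp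
  then show ?thesis by (subst sym1[OF assms(3)])
qed

lemma mom2_raw:
  assumes "n \<ge> 2"
  shows "(\<Sum>\<sigma>\<in>Perms n. (\<Sum>j=1..n. w j * eps (\<sigma> j))^2)
    = real (card (Perms n)) * (\<Sum>j=1..n. (w j)^2)
      + (\<Sum>\<sigma>\<in>Perms n. eps (\<sigma> 1) * eps (\<sigma> 2)) * ((\<Sum>j=1..n. w j)^2 - (\<Sum>j=1..n. (w j)^2))"
proof -
  define N where "N = real (card (Perms n))"
  define B where "B = (\<Sum>\<sigma>\<in>Perms n. eps (\<sigma> 1) * eps (\<sigma> 2))"
  have M: "(\<Sum>\<sigma>\<in>Perms n. eps (\<sigma> j) * eps (\<sigma> j')) = B + (if j = j' then N - B else 0)"
    if "j \<in> {1..n}" "j' \<in> {1..n}" for j j'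
  proof (cases "j = j'")
    case True
    then show ?thesis by (simp add: eps_sq N_def)
  next
    case False
    then show ?thesis using sym2[OF that False assms, of "\<lambda>a b. eps a * eps b"] by (simp add: B_def)
  qed
  have "(\<Sum>\<sigma>\<in>Perms n. (\<Sum>j=1..n. w j * eps (\<sigma> j))^2)
      = (\<Sum>\<sigma>\<in>Perms n. \<Sum>j=1..n. \<Sum>j'=1..n. w j * w j' * (eps (\<sigma> j) * eps (\<sigma> j')))"
    unfolding power2_eq_square sum_product by (simp add: mult_ac)
  also have "\<dots> = (\<Sum>j=1..n. \<Sum>j'=1..n. w j * w j' * (\<Sum>\<sigma>\<in>Perms n. eps (\<sigma> j) * eps (\<sigma> j')))"
  proof -
    have "(\<Sum>\<sigma>\<in>Perms n. \<Sum>j=1..n. \<Sum>j'=1..n. w j * w j' * (eps (\<sigma> j) * eps (\<sigma> j')))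
       = (\<Sum>j=1..n. \<Sum>\<sigma>\<in>Perms n. \<Sum>j'=1..n. w j * w j' * (eps (\<sigma> j) * eps (\<sigma> j')))"
      by (rule sum.swap)
    also have "\<dots> = (\<Sum>j=1..n. \<Sum>j'=1..n. \<Sum>\<sigma>\<in>Perms n. w j * w j' * (eps (\<sigma> j) * eps (\<sigma> j')))"
      by (rule sum.cong[OF refl], rule sum.swap)
    finally show ?thesis by (simp add: sum_distrib_left)
  qed
  also have "\<dots> = (\<Sum>j=1..n. \<Sum>j'=1..n. w j * w j' * (B + (if j = j' then N - B else 0)))"
    by (intro sum.cong refl) (simp add: M)
  also have "\<dots> = B * (\<Sum>j=1..n. \<Sum>j'=1..n. w j * w j') + (N - B) * (\<Sum>j=1..n. (w j)^2)"
  proof -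
    have e: "(\<Sum>j'=1..n. w j * w j' * (B + (if j = j' then N - B else 0))) = B*(\<Sum>j'=1..n. w j * w j') + (N-B) * (w j)^2"
      if "j \<in> {1..n}" for j
    proof -
      have "(\<Sum>j'=1..n. w j * w j' * (B + (if j = j' then N - B else 0)))
          = (\<Sum>j'=1..n. B * (w j * w j')) + (\<Sum>j'=1..n. (if j = j' then (N - B) * (w j * w j') else 0))"
        unfolding sum.distrib[symmetric]
        by (rule sum.cong[OF refl]) (auto simp: algebra_simps)
      also have "\<dots> = B*(\<Sum>j'=1..n. w j * w j') + (N-B) * (w j)^2"
        using that by (simp add: sum_distrib_left power2_eq_square)
      finally show ?thesis .
    qed
    have "(\<Sum>j=1..n. \<Sum>j'=1..n. w j * w j' * (B + (if j = j' then N - B else 0)))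
        = (\<Sum>j=1..n. B*(\<Sum>j'=1..n. w j * w j') + (N-B) * (w j)^2)"
      by (rule sum.cong[OF refl]) (rule e)
    then show ?thesis by (simp add: sum.distrib sum_distrib_left)
  qed
  also have "\<dots> = N * (\<Sum>j=1..n. (w j)^2) + B * ((\<Sum>j=1..n. w j)^2 - (\<Sum>j=1..n. (w j)^2))"
  proof -
    have "(\<Sum>j=1..n. w j)^2 = (\<Sum>j=1..n. \<Sum>j'=1..n. w j * w j')"
      unfolding power2_eq_square sum_product ..
    then show ?thesis by (simp add: right_diff_distrib left_diff_distrib)
  qed
  finally show ?thesis unfolding N_def B_def .
qed

lemma mom2:
  assumes "even n" "n \<ge> 2"
  shows "(\<Sum>\<sigma>\<in>Perms n. (\<Sum>j=1..n. w j * eps (\<sigma> j))^2) / real (card (Perms n))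
    = real n / (real n - 1) * ((\<Sum>j=1..n. (w j)^2) - (\<Sum>j=1..n. w j)^2 / real n)"
proof -
  define N where "N = real (card (Perms n))"
  define B where "B = (\<Sum>\<sigma>\<in>Perms n. eps (\<sigma> 1) * eps (\<sigma> 2))"
  have N: "N > 0" unfolding N_def using Perms_finite Perms_ne by (simp add: card_gt_0_iff)
  have "0 = N * real n + B * (real n ^2 - real n)"
    using mom2_raw[OF assms(2), of "\<lambda>_. 1"] perm_sum[of _ n eps] eps_total[OF assms(1)]
    by (simp add: N_def B_def)
  then have "B * (real n * (real n - 1)) = - N * real n" by (simp add: power2_eq_square algebra_simps)
  then have "(B * (real n - 1) + N) * real n = 0" by (simp add: algebra_simps)
  then have "B * (real n - 1) = - N" using assms by simp
  then have B: "B = - N / (real n - 1)" using assms by (simp add: field_simps)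
  show ?thesis
  proof -
    define X where "X = (\<Sum>\<sigma>\<in>Perms n. (\<Sum>j=1..n. w j * eps (\<sigma> j))^2)"
    define S1 where "S1 = (\<Sum>j=1..n. w j)"
    define S2 where "S2 = (\<Sum>j=1..n. (w j)^2)"
    have n1: "real n - 1 > 0" using assms by simp
    have raw: "X = N * S2 + B * (S1^2 - S2)"
      using mom2_raw[OF assms(2), of w] unfolding N_def B_def X_def S1_def S2_def by simp
    have "X * (real n - 1) = N * (real n * S2 - S1^2)"
      unfolding raw B using n1 by (simp add: field_simps)
    then have "X / N = (real n * S2 - S1^2) / (real n - 1)"
      using n1 N by (simp add: field_simps)
    also have "\<dots> = real n / (real n - 1) * (S2 - S1^2 / real n)"
      using n1 assms by (simp add: field_simps)
    finally show ?thesis unfolding X_def S1_def S2_def N_def .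
  qed
qed
definition Kq :: "nat \<Rightarrow> real \<Rightarrow> real" where
  "Kq n q = real n / (real n - 1) * ((\<Sum>j=1..n. (q^(n-j))^2) - (\<Sum>j=1..n. q^(n-j))^2 / real n)"

lemma epoch_exp:
  assumes "even n" "n \<ge> 2"
  shows "measure_pmf.expectation (pmf_of_set (Perms n)) (\<lambda>\<sigma>. (rr_epoch (ff lam G) n \<eta> \<sigma> x)^2)
     = ((1-\<eta>*lam)^n)^2 * x^2 + \<eta>^2 * (G^2/4) * Kq n (1-\<eta>*lam)"
proof -
  define q where "q = 1 - \<eta>*lam"
  define w where "w j = q^(n-j)" for j
  define T where "T \<sigma> = (\<Sum>j=1..n. w j * eps (\<sigma> j))" for \<sigma> :: "nat \<Rightarrow> nat"
  define N where "N = real (card (Perms n))"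
  have N: "N > 0" unfolding N_def using Perms_finite Perms_ne by (simp add: card_gt_0_iff)
  have ep: "rr_epoch (ff lam G) n \<eta> \<sigma> x = q^n * x - \<eta> * (G/2) * T \<sigma>" for \<sigma>
    unfolding epoch_closed q_def[symmetric] T_def w_def bb_def eps_def
    by (simp add: sum_distrib_left algebra_simps)
  have sT: "(\<Sum>\<sigma>\<in>Perms n. T \<sigma>) = 0"
  proof -
    have "(\<Sum>\<sigma>\<in>Perms n. T \<sigma>) = (\<Sum>j=1..n. w j * (\<Sum>\<sigma>\<in>Perms n. eps (\<sigma> j)))"
      unfolding T_def sum_distrib_left by (rule sum.swap)
    also have "\<dots> = 0" using mean0[OF assms] by simp
    finally show ?thesis .
  qed
  have "measure_pmf.expectation (pmf_of_set (Perms n)) (\<lambda>\<sigma>. (rr_epoch (ff lam G) n \<eta> \<sigma> x)^2)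
      = (\<Sum>\<sigma>\<in>Perms n. (q^n * x - \<eta> * (G/2) * T \<sigma>)^2) / N"
    unfolding ep N_def by (rule integral_pmf_of_set[OF Perms_ne Perms_finite])
  also have "(\<Sum>\<sigma>\<in>Perms n. (q^n * x - \<eta> * (G/2) * T \<sigma>)^2)
      = N * ((q^n)^2 * x^2) - 2 * q^n * x * \<eta> * (G/2) * (\<Sum>\<sigma>\<in>Perms n. T \<sigma>)
        + \<eta>^2 * (G^2/4) * (\<Sum>\<sigma>\<in>Perms n. (T \<sigma>)^2)"
    unfolding N_def power2_diff
    by (simp add: sum.distrib sum_subtractf sum_distrib_left power_mult_distrib algebra_simps power2_eq_square)
  also have "\<dots> / N = (q^n)^2 * x^2 + \<eta>^2 * (G^2/4) * ((\<Sum>\<sigma>\<in>Perms n. (T \<sigma>)^2) / N)"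
    using N sT by (simp add: field_simps)
  also have "(\<Sum>\<sigma>\<in>Perms n. (T \<sigma>)^2) / N = Kq n q"
    unfolding T_def N_def mom2[OF assms] Kq_def w_def ..
  finally show ?thesis unfolding q_def .
qed

lemma fin_iter: "finite (set_pmf (rr_iter f n \<eta> x0 t))"
proof (induction t)
  case 0 then show ?case by simp
next
  case (Suc t)
  have "finite {\<sigma>. \<sigma> permutes {1..n}}" "{\<sigma>. \<sigma> permutes {1..n}} \<noteq> {}"
    using Perms_finite Perms_ne unfolding Perms_def by auto
  then show ?case using Suc by simp
qed

lemma iter_rec:
  assumes "even n" "n \<ge> 2"
  shows "measure_pmf.expectation (rr_iter (ff lam G) n \<eta> x0 (Suc t)) (\<lambda>x. x^2)
    = ((1-\<eta>*lam)^n)^2 * measure_pmf.expectation (rr_iter (ff lam G) n \<eta> x0 t) (\<lambda>x. x^2)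
      + \<eta>^2 * (G^2/4) * Kq n (1-\<eta>*lam)"
proof -
  define p where "p = rr_iter (ff lam G) n \<eta> x0 t"
  define A where "A = set_pmf p"
  define Q where "Q = ((1-\<eta>*lam)^n)^2"
  define C where "C = \<eta>^2 * (G^2/4) * Kq n (1-\<eta>*lam)"
  have A: "finite A" unfolding A_def p_def by (rule fin_iter)
  have PP: "{\<sigma>. \<sigma> permutes {1..n}} = Perms n" unfolding Perms_def ..
  have "measure_pmf.expectation (rr_iter (ff lam G) n \<eta> x0 (Suc t)) (\<lambda>x. x^2)
     = (\<Sum>a\<in>A. pmf p a *\<^sub>R measure_pmf.expectation
          (map_pmf (\<lambda>\<sigma>. rr_epoch (ff lam G) n \<eta> \<sigma> a) (pmf_of_set (Perms n))) (\<lambda>x. x^2))"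
    unfolding rr_iter.simps p_def[symmetric] PP
    by (rule pmf_expectation_bind) (use A Perms_finite Perms_ne in \<open>auto simp: A_def\<close>)
  also have "\<dots> = (\<Sum>a\<in>A. pmf p a * (Q * a^2 + C))"
    using epoch_exp[OF assms] by (simp add: Q_def C_def)
  also have "\<dots> = Q * (\<Sum>a\<in>A. a^2 * pmf p a) + C * (\<Sum>a\<in>A. pmf p a)"
    by (simp add: sum.distrib sum_distrib_left algebra_simps)
  also have "(\<Sum>a\<in>A. pmf p a) = 1" using sum_pmf_eq_1[OF A] by (simp add: A_def)
  also have "(\<Sum>a\<in>A. a^2 * pmf p a) = measure_pmf.expectation p (\<lambda>x. x^2)"
    by (rule integral_measure_pmf_real[symmetric]) (use A in \<open>auto simp: A_def\<close>)
  finally show ?thesis unfolding p_def Q_def C_def by simp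
qed

lemma iter_closed:
  assumes "even n" "n \<ge> 2"
  shows "measure_pmf.expectation (rr_iter (ff lam G) n \<eta> 1 k) (\<lambda>x. x^2)
    = (((1-\<eta>*lam)^n)^2)^k + \<eta>^2 * (G^2/4) * Kq n (1-\<eta>*lam) * (\<Sum>t<k. (((1-\<eta>*lam)^n)^2)^t)"
proof (induction k)
  case 0 then show ?case by simp
next
  case (Suc k)
  have g: "(\<Sum>t<Suc k. r^t) = 1 + r * (\<Sum>t<k. r^t)" for r :: real
    by (subst sum.lessThan_Suc_shift) (simp add: sum_distrib_left)
  show ?case unfolding iter_rec[OF assms] Suc g
    by (simp add: algebra_simps)
qed

definition Dq :: "nat \<Rightarrow> real \<Rightarrow> real" where
  "Dq n q = (\<Sum>j=1..n. (q^(n-j))^2) - (\<Sum>j=1..n. q^(n-j))^2 / real n"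

lemma cs_test:
  assumes "n \<ge> 1" "(\<Sum>j=1..n. v j) = (0::real)"
  shows "(\<Sum>j=1..n. w j * v j)^2 \<le> ((\<Sum>j=1..n. (w j)^2) - (\<Sum>j=1..n. w j)^2 / real n) * (\<Sum>j=1..n. (v j)^2)"
proof -
  define m where "m = (\<Sum>j=1..n. w j) / real n"
  have "(\<Sum>j=1..n. (w j - m) * v j) = (\<Sum>j=1..n. w j * v j) - m * (\<Sum>j=1..n. v j)"
    by (simp add: left_diff_distrib sum_subtractf sum_distrib_left)
  then have e1: "(\<Sum>j=1..n. (w j - m) * v j) = (\<Sum>j=1..n. w j * v j)" using assms by simp
  have "(\<Sum>j=1..n. (w j - m)^2) = (\<Sum>j=1..n. (w j)^2) - 2 * m * (\<Sum>j=1..n. w j) + real n * m^2"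
    by (simp add: power2_diff sum.distrib sum_subtractf sum_distrib_left mult_ac)
  also have "\<dots> = (\<Sum>j=1..n. (w j)^2) - (\<Sum>j=1..n. w j)^2 / real n"
    using assms unfolding m_def by (simp add: field_simps power2_eq_square)
  finally have e2: "(\<Sum>j=1..n. (w j - m)^2) = \<dots>" .
  show ?thesis using Cauchy_Schwarz_ineq_sum[of "\<lambda>j. w j - m" v "{1..n}"] unfolding e1 e2 .
qed

lemma Dq_test1:
  assumes "n \<ge> 2"
  shows "(1 - q)^2 \<le> 2 * Dq n q"
proof -
  define v where "v j = (if j = n then 1 else if j = n - 1 then -1 else (0::real))" for j
  have fin: "finite {1..n}" by simp
  have mem: "n \<in> {1..n}" "n - 1 \<in> {1..n}" "n - 1 \<noteq> n" using assms by auto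
  have v1: "(\<Sum>j=1..n. v j) = 0"
  proof -
    have "(\<Sum>j=1..n. v j) = (\<Sum>j=1..n. (if j = n then 1 else 0)) + (\<Sum>j=1..n. (if j = n - 1 then -1 else 0))"
      unfolding sum.distrib[symmetric] v_def by (rule sum.cong) (use mem in auto)
    then show ?thesis using mem by simp
  qed
  have v2: "(\<Sum>j=1..n. (v j)^2) = 2"
  proof -
    have "(\<Sum>j=1..n. (v j)^2) = (\<Sum>j=1..n. (if j = n then 1 else 0)) + (\<Sum>j=1..n. (if j = n - 1 then 1 else 0))"
      unfolding sum.distrib[symmetric] v_def by (rule sum.cong) (use mem in auto)
    then show ?thesis using mem by simp
  qed
  have v3: "(\<Sum>j=1..n. q^(n-j) * v j) = 1 - q"
  proof -
    have "(\<Sum>j=1..n. q^(n-j) * v j) = (\<Sum>j=1..n. (if j = n then 1 else 0)) + (\<Sum>j=1..n. (if j = n - 1 then -q else 0))"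
      unfolding sum.distrib[symmetric] v_def by (rule sum.cong) (use mem assms in \<open>auto simp: diff_diff_cancel\<close>)
    then show ?thesis using mem by simp
  qed
  have "(\<Sum>j=1..n. q^(n-j) * v j)^2 \<le> Dq n q * 2"
    using cs_test[of n v "\<lambda>j. q^(n-j)"] assms v1 v2 unfolding Dq_def by simp
  then show ?thesis unfolding v3 by simp
qed

lemma sum_rev_idx: "(\<Sum>j=1..(n::nat). h j) = (\<Sum>m<n. h (n - m))"
  by (rule sum.reindex_bij_witness[of _ "\<lambda>m. n - m" "\<lambda>j. n - j"]) auto

lemma sum_split_add: "(\<Sum>m<p+r. g m) = (\<Sum>m<p. g m) + (\<Sum>m<(r::nat). g (p+m))"
  by (induction r) (auto simp: add_ac)

lemma Dq_test2:
  assumes "n = 2*p" "p \<ge> 1"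
  shows "(1 - q^p)^4 \<le> real n * (1-q)^2 * Dq n q"
proof -
  define v where "v j = (if j > p then 1 else (-1::real))" for j
  have nn: "n \<ge> 1" using assms by simp
  have v1: "(\<Sum>j=1..n. v j) = 0"
  proof -
    have "(\<Sum>j=1..n. v j) = (\<Sum>m<p+p. v (n - m))" unfolding sum_rev_idx using assms by (simp add: mult_2)
    also have "\<dots> = (\<Sum>m<p. v (n-m)) + (\<Sum>m<p. v (n - (p+m)))" by (rule sum_split_add)
    also have "(\<Sum>m<p. v (n-m)) = (\<Sum>m<p. 1)"
      by (rule sum.cong) (use assms in \<open>auto simp: v_def\<close>)
    also have "(\<Sum>m<p. v (n-(p+m))) = (\<Sum>m<p. -1)"
      by (rule sum.cong) (use assms in \<open>auto simp: v_def\<close>)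
    finally show ?thesis by simp
  qed
  have v2: "(\<Sum>j=1..n. (v j)^2) = real n"
  proof -
    have "(\<Sum>j=1..n. (v j)^2) = (\<Sum>j=1..n. 1)" by (rule sum.cong) (auto simp: v_def)
    then show ?thesis by simp
  qed
  have v3: "(\<Sum>j=1..n. q^(n-j) * v j) = (1 - q^p) * (\<Sum>m<p. q^m)"
  proof -
    have "(\<Sum>j=1..n. q^(n-j) * v j) = (\<Sum>m<p+p. q^(n-(n-m)) * v (n - m))"
      unfolding sum_rev_idx using assms by (simp add: mult_2)
    also have "\<dots> = (\<Sum>m<p. q^(n-(n-m)) * v (n-m)) + (\<Sum>m<p. q^(n-(n-(p+m))) * v (n - (p+m)))"
      by (rule sum_split_add)
    also have "(\<Sum>m<p. q^(n-(n-m)) * v (n-m)) = (\<Sum>m<p. q^m)"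
      by (rule sum.cong) (use assms in \<open>auto simp: v_def\<close>)
    also have "(\<Sum>m<p. q^(n-(n-(p+m))) * v (n - (p+m))) = - (q^p * (\<Sum>m<p. q^m))"
      unfolding sum_distrib_left sum_negf[symmetric]
      by (rule sum.cong) (use assms in \<open>auto simp: v_def power_add\<close>)
    finally show ?thesis by (simp add: algebra_simps)
  qed
  have g: "(1 - q) * (\<Sum>m<p. q^m) = 1 - q^p" by (rule one_diff_power_eq[symmetric])
  have cs: "((1 - q^p) * (\<Sum>m<p. q^m))^2 \<le> Dq n q * real n"
    using cs_test[of n v "\<lambda>j. q^(n-j)", OF nn v1] v2 v3 unfolding Dq_def by simp
  have "(1 - q^p)^4 = ((1 - q^p) * (\<Sum>m<p. q^m))^2 * (1-q)^2"
    unfolding g[symmetric] by (simp add: power2_eq_square power4_eq_xxxx)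
  also have "\<dots> \<le> Dq n q * real n * (1-q)^2" using cs by (simp add: mult_right_mono)
  finally show ?thesis by (simp add: algebra_simps)
qed



lemma L1: assumes "0 \<le> u" "u \<le> 1" shows "(1-u)^m * (1 + real m * u) \<le> (1::real)"
proof -
  have "1 + real m * u \<le> (1+u)^m" using Bernoulli_inequality[of u m] assms by simp
  then have "(1-u)^m * (1 + real m * u) \<le> (1-u)^m * (1+u)^m"
    using assms by (intro mult_left_mono) auto
  also have "\<dots> = (1 - u^2)^m" by (simp add: power_mult_distrib[symmetric] power2_eq_square algebra_simps)
  also have "\<dots> \<le> 1" using assms by (intro power_le_one) (auto simp: power_le_one)
  finally show ?thesis .
qed

lemma Bern: assumes "u \<le> 1" shows "1 - real m * u \<le> (1-u)^m"
  using Bernoulli_inequality[of "-u" m] assms by simp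

lemma poly_y: assumes "y \<ge> 1/8" shows "1 + 4*y \<le> 2^13 * (y::real)^4"
proof -
  have "y^3 \<ge> (1/8)^3" using assms by (intro power_mono) auto
  then have "y * y^3 \<ge> y * (1/8)^3" using assms by (intro mult_left_mono) auto
  moreover have "y^4 = y * y^3" by (simp add: power_Suc[symmetric] del: power_Suc)
  moreover have "(1/8::real)^3 = 1/512" by (simp add: power_divide)
  ultimately have "y^4 \<ge> y / 512" by simp
  then have "1 + 4*y \<le> 8192 * y^4" using assms by linarith
  then show ?thesis by simp
qed

lemma core:
  fixes p k :: nat and u g D :: real
  assumes p: "p \<ge> 1" and k: "k \<ge> 1" and u: "u > 0" and g: "g \<ge> 4"
    and h1: "u^2 \<le> 2*D" and h2: "(1 - (1-u)^p)^4 \<le> real (2*p) * u^2 * D"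
  shows "(1/2^19) * min 1 (g / (real (2*p) * real k^3))
     \<le> (((1-u)^(2*p))^2)^k + g/4 * u^2 * D * (\<Sum>t<k. (((1-u)^(2*p))^2)^t)"
proof -
  define r where "r = ((1-u)^(2*p))^2"
  have r0: "r \<ge> 0" unfolding r_def by simp
  have rpow: "r^t = (1-u)^(4*p*t)" for t unfolding r_def by (simp add: power_mult[symmetric] mult_ac)
  define Sm where "Sm = (\<Sum>t<k. r^t)"
  have Sm1: "Sm \<ge> 1"
  proof -
    have "r^0 \<le> Sm" unfolding Sm_def by (rule member_le_sum) (use k r0 in auto)
    then show ?thesis by simp
  qed
  have D0: "D \<ge> 0" using h1 by (smt (verit) zero_le_power2)
  define M where "M = min 1 (g / (real (2*p) * real k^3))"
  define T where "T = g/4 * u^2 * D"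
  have T0: "T \<ge> 0" unfolding T_def using g D0 by simp
  have TS: "T \<le> T * Sm" using T0 Sm1 by (simp add: mult_le_cancel_left1)
  have rk0: "r^k \<ge> 0" using r0 by simp
  have M1: "M \<le> 1" unfolding M_def by simp
  have Mg: "M \<le> g / (2 * real p)"
  proof -
    have "real k ^3 \<ge> 1" using k by simp
    then have "real (2*p) * real k^3 \<ge> 2 * real p" using p by (simp add: mult_le_cancel_left1)
    then have "g / (real (2*p) * real k^3) \<le> g / (2 * real p)" using g p k
      by (intro divide_left_mono) (auto intro!: mult_pos_pos)
    then show ?thesis unfolding M_def by linarith
  qed
  have hM: "(1/2^19) * M \<le> 1/2" using M1 by simp
  have goal: "(1/2^19) * M \<le> r^k + T * Sm"
  proof (cases "u \<ge> 1")
    case True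
    then have "u^2 \<ge> 1" by (simp add: one_le_power)
    then have "D \<ge> 1/2" using h1 by simp
    then have "T \<ge> 4/4 * 1 * (1/2)" unfolding T_def using g \<open>u^2 \<ge> 1\<close>
      by (intro mult_mono) auto
    then show ?thesis using TS rk0 hM by linarith
  next
    case False
    then have u1: "u < 1" by simp
    define x where "x = real p * u"
    have x0: "x > 0" unfolding x_def using p u by simp
    have L: "(1-u)^m * (1 + real m * u) \<le> 1" for m using L1[of u m] u u1 by simp
    have B: "1 - real m * u \<le> (1-u)^m" for m using Bern[of u m] u1 by simp
    have a1: "(1-u)^p * (1 + x) \<le> 1" using L[of p] unfolding x_def .
    have hT: "T = g / (8 * real p) * (real (2*p) * u^2 * D)" unfolding T_def using p by (simp add: field_simps)
    show ?thesis
    proof (cases "8 * x * real k \<le> 1")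
      case True
      have "1 - real (4*p*k) * u \<le> r^k" using B[of "4*p*k"] rpow[of k] by simp
      moreover have "real (4*p*k) * u = 4 * x * real k" unfolding x_def by simp
      ultimately have "r^k \<ge> 1/2" using True by linarith
      moreover have "T * Sm \<ge> 0" using T0 Sm1 by simp
      ultimately show ?thesis using hM by linarith
    next
      case False
      then have xk: "8 * x * real k > 1" by simp
      show ?thesis
      proof (cases "x \<ge> 1")
        case True
        have "(1-u)^p * 2 \<le> (1-u)^p * (1+x)" using True u1 by (intro mult_left_mono) auto
        then have "(1-u)^p \<le> 1/2" using a1 by simp
        then have "1 - (1-u)^p \<ge> 1/2" by simp
        then have "(1 - (1-u)^p)^4 \<ge> (1/2)^4" by (intro power_mono) auto
        then have "real (2*p) * u^2 * D \<ge> 1/16" using h2 by (simp add: power_divide)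
        then have "T \<ge> g / (8 * real p) * (1/16)" unfolding hT using g p
          by (intro mult_left_mono) auto
        then have "T \<ge> g / (128 * real p)" by simp
        moreover have "(1/2^19) * (g / (2 * real p)) \<le> g / (128 * real p)" using g p
          by (simp add: field_simps)
        moreover have "(1/2^19) * M \<le> (1/2^19) * (g / (2 * real p))" using Mg by (intro mult_left_mono) auto
        ultimately show ?thesis using TS rk0 by linarith
      next
        case False
        then have x1: "x < 1" by simp
        have "(1-u)^p * (1+x) \<le> 1" by (rule a1)
        then have "(1-u)^p \<le> 1/(1+x)" using x0 by (simp add: field_simps)
        then have "1 - (1-u)^p \<ge> x/(1+x)" using x0 by (simp add: field_simps)
        moreover have "x/(1+x) \<ge> x/2" using x0 x1 by (intro divide_left_mono) auto
        ultimately have "1 - (1-u)^p \<ge> x/2" by linarith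
        then have "(1 - (1-u)^p)^4 \<ge> (x/2)^4" using x0 by (intro power_mono) auto
        then have "real (2*p) * u^2 * D \<ge> x^4/16" using h2 by (simp add: power_divide)
        then have Tx: "T \<ge> g / (8 * real p) * (x^4/16)" unfolding hT using g p
          by (intro mult_left_mono) auto
        have rk: "r^k * (1 + 4 * x * real k) \<le> 1" using L[of "4*p*k"] rpow[of k] unfolding x_def by (simp add: mult_ac)
        have r1: "1 - r \<le> 4 * x" using B[of "4*p"] rpow[of 1] unfolding x_def by simp
        have rlt: "r < 1"
        proof -
          have "(1-u)^(4*p) < 1" using u u1 p by (subst power_less_one_iff) auto
          then show ?thesis using rpow[of 1] by simp
        qed
        have geo: "(1 - r) * Sm = 1 - r^k" unfolding Sm_def by (rule one_diff_power_eq[symmetric])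
        have "1 - r^k \<ge> 4 * x * real k / (1 + 4 * x * real k)"
        proof -
          have pos: "1 + 4 * x * real k > 0" using x0 by (simp add: add_pos_nonneg)
          have "r^k \<le> 1 / (1 + 4 * x * real k)" using rk by (subst pos_le_divide_eq[OF pos])
          moreover have "4 * x * real k / (1 + 4 * x * real k) = 1 - 1 / (1 + 4 * x * real k)"
            using pos by (simp add: field_simps)
          ultimately show ?thesis by linarith
        qed
        moreover have "(1 - r) * Sm \<le> 4 * x * Sm" using r1 Sm1 by (intro mult_right_mono) auto
        ultimately have "4 * x * Sm \<ge> 4 * x * real k / (1 + 4 * x * real k)" using geo by linarith
        moreover have "4 * x * real k / (1 + 4 * x * real k) = (4 * x) * (real k / (1 + 4 * x * real k))" by simp
        ultimately have "(4 * x) * (real k / (1 + 4 * x * real k)) \<le> (4 * x) * Sm" by linarith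
        then have Sk: "Sm \<ge> real k / (1 + 4 * x * real k)" by (rule mult_left_le_imp_le) (use x0 in simp)
        define K where "K = real k"
        define P where "P = real p"
        have K0: "K > 0" "P > 0" unfolding K_def P_def using k p by auto
        have poly: "1 + 4 * (x*K) \<le> 8192 * (x*K)^4" using poly_y[of "x*K"] xk unfolding K_def by simp
        have c3: "T * Sm \<ge> (g / (8 * P) * (x^4/16)) * (K / (1 + 4 * x * K))"
          using Tx Sk x0 K0 g T0 unfolding K_def[symmetric] P_def[symmetric]
          by (intro mult_mono) auto
        have c2: "(g / (8 * P) * (x^4/16)) * (K / (1 + 4 * x * K))
            = g / (2^20 * P * K^3) * (8192 * (x*K)^4 / (1 + 4 * (x*K)))"
          using K0 x0 apply (simp add: field_simps power_mult_distrib)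
          apply (subst frac_eq_eq)
          subgoal proof -
            have "0 < P*128 + K*(P*(x*512))" using K0 x0 by (intro add_pos_pos mult_pos_pos) auto
            then show "P * 128 + K * (P * (x * 512)) \<noteq> 0" by simp
          qed
          subgoal proof -
            have "0 < P * (K ^ 3 * 128) + K * (P * (x * (K ^ 3 * 512)))" using K0 x0 by (intro add_pos_pos mult_pos_pos) auto
            then show "P * (K ^ 3 * 128) + K * (P * (x * (K ^ 3 * 512))) \<noteq> 0" by simp
          qed
          by (simp add: power4_eq_xxxx power3_eq_cube algebra_simps)
        have c1: "g / (2^20 * P * K^3) * (8192 * (x*K)^4 / (1 + 4 * (x*K))) \<ge> g / (2^20 * P * K^3) * 1"
        proof (intro mult_left_mono)
          have "0 < 1 + 4 * (x*K)" using x0 K0 by (simp add: add_pos_pos)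
          then show "1 \<le> 8192 * (x*K)^4 / (1 + 4 * (x*K))" using poly by (subst le_divide_eq) simp
          show "0 \<le> g / (2^20 * P * K^3)" using g K0 by simp
        qed
        have "T * Sm \<ge> g / (2^20 * P * K^3)" using c1 c2 c3 by simp
        moreover have "(1/2^19) * M \<le> g / (2^20 * P * K^3)"
        proof -
          have "M \<le> g / (2 * P * K^3)" unfolding M_def K_def P_def by simp
          then show ?thesis using K0 by (simp add: field_simps)
        qed
        ultimately show ?thesis using rk0 by linarith
      qed
    qed
  qed
  show ?thesis using goal unfolding M_def T_def Sm_def r_def by simp
qed


lemma inf_sq: assumes "lam > 0" shows "(INF y. lam/2 * (y::real)^2) = 0"
  by (rule cInf_eq_minimum) (use assms in auto)

theorem proposition1:
  shows "\<exists>c::real. c > 0 \<and>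
    (\<forall>(n::nat) (k::nat) (G::real) (lam::real).
       even n \<and> n \<ge> 2 \<and> k \<ge> 1 \<and> G > 0 \<and> lam > 0 \<and> G \<ge> 2 * lam \<longrightarrow>
       (\<exists>(f::nat \<Rightarrow> real \<Rightarrow> real) (x0::real). assumptionA n lam G f x0 \<and>
          (\<forall>\<eta>::real. \<eta> > 0 \<longrightarrow>
             measure_pmf.expectation (rr_iter f n \<eta> x0 k)
               (\<lambda>x. avgF n f x - (INF y. avgF n f y))
             \<ge> c * min lam (G^2 / (lam * real n * real k ^ 3)))))"
proof (intro exI[of _ "1/2^20"] conjI allI impI)
  show "(0::real) < 1/2^20" by simp
  fix n k :: nat and G lam :: real
  assume H: "even n \<and> n \<ge> 2 \<and> k \<ge> 1 \<and> G > 0 \<and> lam > 0 \<and> G \<ge> 2 * lam"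
  then have ev: "even n" and n2: "n \<ge> 2" and k1: "k \<ge> 1" and G0: "G > 0" and l0: "lam > 0" and Gl: "G \<ge> 2*lam"
    by auto
  obtain p where np: "n = 2*p" using ev by auto
  have p1: "p \<ge> 1" using np n2 by simp
  show "\<exists>(f::nat \<Rightarrow> real \<Rightarrow> real) (x0::real). assumptionA n lam G f x0 \<and>
          (\<forall>\<eta>::real. \<eta> > 0 \<longrightarrow>
             measure_pmf.expectation (rr_iter f n \<eta> x0 k)
               (\<lambda>x. avgF n f x - (INF y. avgF n f y))
             \<ge> 1/2^20 * min lam (G^2 / (lam * real n * real k ^ 3)))"
  proof (intro exI[of _ "ff lam G"] exI[of _ 1] conjI allI impI)
    show "assumptionA n lam G (ff lam G) 1" using assmA ev n2 G0 l0 Gl by simp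
    fix \<eta> :: real assume e0: "\<eta> > 0"
    define u where "u = \<eta> * lam"
    define g where "g = G^2 / lam^2"
    define q where "q = 1 - \<eta>*lam"
    have u0: "u > 0" unfolding u_def using e0 l0 by simp
    have g4: "g \<ge> 4"
    proof -
      have "(2*lam)^2 \<le> G^2" using Gl l0 by (intro power_mono) auto
      then show ?thesis unfolding g_def using l0 by (simp add: field_simps power_mult_distrib)
    qed
    have qu: "q = 1 - u" unfolding q_def u_def ..
    have t1: "(1 - q)^2 \<le> 2 * Dq n q" by (rule Dq_test1[OF n2])
    have t2: "(1 - q^p)^4 \<le> real n * (1-q)^2 * Dq n q" by (rule Dq_test2[OF np p1])
    have D0: "Dq n q \<ge> 0" using t1 by (smt (verit) zero_le_power2)
    have KD: "Kq n q \<ge> Dq n q"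
    proof -
      have "real n / (real n - 1) \<ge> 1" using n2 by (simp add: field_simps)
      then have "real n / (real n - 1) * Dq n q \<ge> 1 * Dq n q" using D0 by (intro mult_right_mono) auto
      then show ?thesis unfolding Kq_def Dq_def by simp
    qed
    have eg: "\<eta>^2 * (G^2/4) = g/4 * u^2" unfolding g_def u_def using l0 by (simp add: field_simps power_mult_distrib)
    define Sm where "Sm = (\<Sum>t<k. (((1-u)^(2*p))^2)^t)"
    have Sm0: "Sm \<ge> 0" unfolding Sm_def by (intro sum_nonneg) auto
    have Ex: "measure_pmf.expectation (rr_iter (ff lam G) n \<eta> 1 k) (\<lambda>x. x^2)
        = (((1-u)^(2*p))^2)^k + g/4 * u^2 * Kq n (1-u) * Sm"
    proof -
      have "1 - \<eta>*lam = 1 - u" unfolding u_def ..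
      then show ?thesis
        using iter_closed[OF ev n2, where \<eta>=\<eta> and lam=lam and G=G and k=k] unfolding Sm_def eg np
        by simp
    qed
    have cr0: "(1/2^19) * min 1 (g / (real (2*p) * real k^3))
       \<le> (((1-u)^(2*p))^2)^k + g/4 * u^2 * Dq (2*p) (1-u) * Sm"
      unfolding Sm_def
      by (rule core[OF p1 k1 u0 g4]) (use t1 t2 in \<open>simp_all add: qu np\<close>)
    have cr: "(1/2^19) * min 1 (g / (real n * real k^3))
       \<le> (((1-u)^(2*p))^2)^k + g/4 * u^2 * Dq n (1-u) * Sm"
      using cr0 unfolding np .
    have "g/4 * u^2 * Dq n (1-u) * Sm \<le> g/4 * u^2 * Kq n (1-u) * Sm"
      using KD g4 Sm0 unfolding qu by (intro mult_right_mono mult_left_mono) auto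
    then have Vb: "(1/2^19) * min 1 (g / (real n * real k^3))
        \<le> measure_pmf.expectation (rr_iter (ff lam G) n \<eta> 1 k) (\<lambda>x. x^2)"
    proof -
      have "(1/2^19) * min 1 (g / (real n * real k^3)) \<le> (((1-u)^(2*p))^2)^k + g/4 * u^2 * Kq n (1-u) * Sm"
        using cr \<open>g/4 * u^2 * Dq n (1-u) * Sm \<le> g/4 * u^2 * Kq n (1-u) * Sm\<close> by linarith
      then show ?thesis using Ex by simp
    qed
    have F: "avgF n (ff lam G) = (\<lambda>x. lam/2 * x^2)" using avgF_ff ev n2 by simp
    have "measure_pmf.expectation (rr_iter (ff lam G) n \<eta> 1 k) (\<lambda>x. avgF n (ff lam G) x - (INF y. avgF n (ff lam G) y))
        = lam/2 * measure_pmf.expectation (rr_iter (ff lam G) n \<eta> 1 k) (\<lambda>x. x^2)"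
      unfolding F inf_sq[OF l0] by simp
    also have "\<dots> \<ge> lam/2 * ((1/2^19) * min 1 (g / (real n * real k^3)))"
      using Vb l0 by (intro mult_left_mono) auto
    also have "lam/2 * ((1/2^19) * min 1 (g / (real n * real k^3)))
        = 1/2^20 * (lam * min 1 (g / (real n * real k^3)))" by simp
    also have "lam * min 1 (g / (real n * real k^3)) = min lam (G^2 / (lam * real n * real k ^ 3))"
      using l0 unfolding g_def by (simp add: min_mult_distrib_left power2_eq_square field_simps)
    finally show "measure_pmf.expectation (rr_iter (ff lam G) n \<eta> 1 k) (\<lambda>x. avgF n (ff lam G) x - (INF y. avgF n (ff lam G) y))
             \<ge> 1/2^20 * min lam (G^2 / (lam * real n * real k ^ 3))" .
  qed
qed

end
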